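(* Let $f:X\to X$ be a continuous map of a compact metric space $(X,d)$. If there exists $\delta>0$ such that $B(\gamma(Sh(f)),\delta)\subset R(f)$, then $Sh(f)\subset X^{deg}$.
   Context: A $\delta$-pseudo-orbit of $f$ is $\{x_i\}_{i\ge0}$ with $d(f(x_i),x_{i+1})<\delta$ for all $i$; it is $\varepsilon$-shadowed by $z$ if $d(f^i(z),x_i)<\varepsilon$ for all $i\ge0$. $Sh(f)$ is the set of $x\in X$ such that for every $\varepsilon>0$ there is $\delta>0$ such that every $\delta$-pseudo-orbit with $x_0=x$ is $\varepsilon$-shadowed by some point of $X$. $R(f)$ is the set of recurrent points: $x$ such that $f^{n_i}(x)\to x$ for some increasing sequence of positive integers $n_i$. $X^{deg}$ is the set of $p\in X$ whose connected component in $X$ is $\{p\}$. For $A\subset X$, $\gamma(A)$ is the union of all connected components of $X$ that meet $A$, and $B(A,\delta)=\{y\in X: d(y,A)<\delta\}$. *)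

theory Defs
  imports "HOL-Analysis.Analysis"
begin

definition pseudo_orbit :: "'a::metric_space set \<Rightarrow> ('a \<Rightarrow> 'a) \<Rightarrow> real \<Rightarrow> (nat \<Rightarrow> 'a) \<Rightarrow> bool" where
  "pseudo_orbit X f \<delta> xs \<longleftrightarrow> (\<forall>i. xs i \<in> X) \<and> (\<forall>i. dist (f (xs i)) (xs (Suc i)) < \<delta>)"

definition shadowed :: "'a::metric_space set \<Rightarrow> ('a \<Rightarrow> 'a) \<Rightarrow> real \<Rightarrow> (nat \<Rightarrow> 'a) \<Rightarrow> bool" where
  "shadowed X f \<epsilon> xs \<longleftrightarrow> (\<exists>z\<in>X. \<forall>i. dist ((f ^^ i) z) (xs i) < \<epsilon>)"

definition Sh :: "'a::metric_space set \<Rightarrow> ('a \<Rightarrow> 'a) \<Rightarrow> 'a set" where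
  "Sh X f = {x \<in> X. \<forall>\<epsilon>>0. \<exists>\<delta>>0. \<forall>xs. pseudo_orbit X f \<delta> xs \<and> xs 0 = x \<longrightarrow> shadowed X f \<epsilon> xs}"

definition recurrent_points :: "'a::metric_space set \<Rightarrow> ('a \<Rightarrow> 'a) \<Rightarrow> 'a set" where
  "recurrent_points X f = {x \<in> X. \<exists>n::nat \<Rightarrow> nat. strict_mono n \<and> n 0 > 0 \<and>
      (\<lambda>i. (f ^^ (n i)) x) \<longlonglongrightarrow> x}"

definition degenerate_points :: "'a::metric_space set \<Rightarrow> 'a set" where
  "degenerate_points X = {p \<in> X. connected_component_set X p = {p}}"

definition comp_hull :: "'a::metric_space set \<Rightarrow> 'a set \<Rightarrow> 'a set" where
  "comp_hull X A = \<Union>{C. C \<in> components X \<and> C \<inter> A \<noteq> {}}"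

definition nbhd :: "'a::metric_space set \<Rightarrow> 'a set \<Rightarrow> real \<Rightarrow> 'a set" where
  "nbhd X A \<delta> = {y \<in> X. \<exists>a\<in>A. dist y a < \<delta>}"

end

theory Submission
  imports Defs
begin

definition chain :: "'a::metric_space set \<Rightarrow> ('a \<Rightarrow> 'a) \<Rightarrow> real \<Rightarrow> 'a \<Rightarrow> 'a \<Rightarrow> nat \<Rightarrow> bool" where
  "chain X f d a b t \<longleftrightarrow> (\<exists>s. s 0 = a \<and> s t = b \<and> (\<forall>i\<le>t. s i \<in> X) \<and> (\<forall>i<t. dist (f (s i)) (s (Suc i)) < d))"

lemma chain_concat_seq:
  assumes "s 0 = a" "s t = b" "\<forall>i\<le>t. s i \<in> X" "\<forall>i<t. dist (f (s i)) (s (Suc i)) < d"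
    and "s' 0 = b" "s' u = c" "\<forall>i\<le>u. s' i \<in> X" "\<forall>i<u. dist (f (s' i)) (s' (Suc i)) < d"
  defines "w \<equiv> (\<lambda>i. if i \<le> t then s i else s' (i - t))"
  shows "w 0 = a \<and> w (t+u) = c \<and> (\<forall>i\<le>t+u. w i \<in> X) \<and> (\<forall>i<t+u. dist (f (w i)) (w (Suc i)) < d) \<and> w t = b"
proof -
  have "\<forall>i<t+u. dist (f (w i)) (w (Suc i)) < d"
  proof (intro allI impI)
    fix i assume i: "i < t+u"
    show "dist (f (w i)) (w (Suc i)) < d"
    proof (cases "i < t")
      case True then show ?thesis using assms(4) by (simp add: w_def)
    next
      case False
      then have "i - t < u" "Suc i - t = Suc (i - t)" using i by auto
      then show ?thesis using assms(8) False assms(2,5) by (cases "i = t") (auto simp: w_def)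
    qed
  qed
  moreover have "\<forall>i\<le>t+u. w i \<in> X" using assms(3,7) by (auto simp: w_def)
  ultimately show ?thesis using assms by (auto simp: w_def)
qed

lemma chain_concat:
  assumes "chain X f d a b t" "chain X f d b c u" shows "chain X f d a c (t+u)"
proof -
  obtain s where A: "s 0 = a" "s t = b" "\<forall>i\<le>t. s i \<in> X" "\<forall>i<t. dist (f (s i)) (s (Suc i)) < d"
    using assms(1) unfolding chain_def by blast
  obtain s' where B: "s' 0 = b" "s' u = c" "\<forall>i\<le>u. s' i \<in> X" "\<forall>i<u. dist (f (s' i)) (s' (Suc i)) < d"
    using assms(2) unfolding chain_def by blast
  note h = chain_concat_seq[of s a t b X f d s' u c, OF A B]
  show ?thesis unfolding chain_def
    apply (rule exI[of _ "\<lambda>i. if i \<le> t then s i else s' (i - t)"])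
    using h by blast
qed

lemma chain_rep:
  assumes "chain X f d a a t" "a \<in> X" shows "chain X f d a a (k*t)"
proof (induction k)
  case 0 then show ?case using assms(2) unfolding chain_def by (rule_tac x="\<lambda>_. a" in exI) auto
next
  case (Suc k) then show ?case using chain_concat[OF assms(1) Suc] by (simp add: add.commute)
qed

lemma chain_local:
  assumes "chain X f d a b t" "t \<ge> 1"
  shows "\<exists>r>0. \<forall>y\<in>X. dist y b < r \<longrightarrow> chain X f d a y t"
proof -
  obtain s where s: "s 0 = a" "s t = b" "\<forall>i\<le>t. s i \<in> X" "\<forall>i<t. dist (f (s i)) (s (Suc i)) < d"
    using assms(1) unfolding chain_def by blast
  define q where "q = dist (f (s (t-1))) b"
  have q: "q < d" using s(4)[rule_format, of "t-1"] s(2) assms(2) by (simp add: q_def)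
  show ?thesis
  proof (intro exI[of _ "d - q"] conjI ballI impI)
    show "d - q > 0" using q by simp
    fix y assume y: "y \<in> X" "dist y b < d - q"
    define s' where "s' = s(t := y)"
    have "\<forall>i<t. dist (f (s' i)) (s' (Suc i)) < d"
    proof (intro allI impI)
      fix i assume i: "i < t"
      show "dist (f (s' i)) (s' (Suc i)) < d"
      proof (cases "Suc i = t")
        case True
        then have "i = t - 1" by simp
        then have "dist (f (s' i)) (s' (Suc i)) = dist (f (s (t-1))) y" using True i by (simp add: s'_def)
        also have "\<dots> \<le> q + dist b y" unfolding q_def by (rule dist_triangle)
        finally show ?thesis using y by (simp add: dist_commute)
      next
        case False then show ?thesis using s(4) i by (simp add: s'_def)
      qed
    qed
    then show "chain X f d a y t" unfolding chain_def
      using s y assms(2) by (rule_tac x=s' in exI) (auto simp: s'_def)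
  qed
qed

lemma chain_orbit:
  assumes "c \<in> X" "f ` X \<subseteq> X" "k \<ge> 1" "dist ((f^^k) c) b < d" "b \<in> X" "d > 0"
  shows "chain X f d c b k"
proof -
  have orb: "(f^^i) c \<in> X" for i by (induction i) (use assms in auto)
  define s where "s = (\<lambda>i. if i < k then (f^^i) c else b)"
  have "\<forall>i<k. dist (f (s i)) (s (Suc i)) < d"
  proof (intro allI impI)
    fix i assume "i < k"
    then show "dist (f (s i)) (s (Suc i)) < d"
      using assms(4,6) by (cases "Suc i = k") (auto simp: s_def funpow_swap1)
  qed
  then show ?thesis unfolding chain_def using assms orb
    by (rule_tac x=s in exI) (auto simp: s_def)
qed

lemma clopen_conn:
  fixes C :: "'a::metric_space set"
  assumes "connected C" "E \<subseteq> C" "E \<noteq> {}"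
    and "\<forall>e\<in>E. \<exists>r>0. \<forall>y\<in>C. dist y e < r \<longrightarrow> y \<in> E"
    and "\<forall>e\<in>C - E. \<exists>r>0. \<forall>y\<in>C. dist y e < r \<longrightarrow> y \<in> C - E"
  shows "E = C"
proof (rule ccontr)
  assume ne: "E \<noteq> C"
  have "openin (top_of_set C) E" unfolding openin_euclidean_subtopology_iff
    using assms(2,4) by (metis dist_commute)
  moreover have "openin (top_of_set C) (C - E)" unfolding openin_euclidean_subtopology_iff
    using assms(5) by (metis Diff_subset dist_commute)
  ultimately show False using assms(1,2,3) ne unfolding connected_openin by blast
qed


lemma funpow_in: "c \<in> X \<Longrightarrow> f ` X \<subseteq> X \<Longrightarrow> (f^^i) c \<in> X"
  by (induction i) auto

lemma funpow_cont: "continuous_on X f \<Longrightarrow> f ` X \<subseteq> X \<Longrightarrow> continuous_on X (f^^k)"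
proof (induction k)
  case 0 then show ?case by (simp add: continuous_on_id)
next
  case (Suc k)
  have "(f^^k) ` X \<subseteq> X" by (rule image_subsetI, rule funpow_in[OF _ Suc.prems(2)])
  then have "continuous_on ((f^^k) ` X) f" using Suc.prems(1) continuous_on_subset by blast
  have "continuous_on X (f \<circ> (f^^k))"
    by (rule continuous_on_compose[OF Suc.IH[OF Suc.prems] \<open>continuous_on ((f^^k) ` X) f\<close>])
  then show ?case by simp
qed

lemma rec_ret:
  assumes "y \<in> recurrent_points X f" "\<eta> > 0"
  shows "\<exists>k\<ge>1. dist ((f^^k) y) y < \<eta>"
proof -
  obtain r :: "nat \<Rightarrow> nat" where r: "strict_mono r" "r 0 > 0" "(\<lambda>i. (f ^^ (r i)) y) \<longlonglongrightarrow> y"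
    using assms(1) unfolding recurrent_points_def by blast
  then obtain j where "dist ((f ^^ (r j)) y) y < \<eta>"
    using assms(2) unfolding tendsto_iff eventually_sequentially by blast
  moreover have "r 0 \<le> r j" using r(1) by (simp add: strict_mono_less_eq)
  then have "r j \<ge> 1" using r(2) by linarith
  ultimately show ?thesis by blast
qed

theorem lemma3p6:
  fixes X :: "'a::metric_space set" and f :: "'a \<Rightarrow> 'a"
  assumes "compact X" and "continuous_on X f" and "f ` X \<subseteq> X"
    and "\<exists>\<delta>>0. nbhd X (comp_hull X (Sh X f)) \<delta> \<subseteq> recurrent_points X f"
  shows "Sh X f \<subseteq> degenerate_points X"
proof
  fix x assume xS: "x \<in> Sh X f"
  obtain \<Delta> where \<Delta>: "\<Delta> > 0" "nbhd X (comp_hull X (Sh X f)) \<Delta> \<subseteq> recurrent_points X f"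
    using assms(4) by blast
  have xX: "x \<in> X" using xS unfolding Sh_def by blast
  define C where "C = connected_component_set X x"
  have xC: "x \<in> C" unfolding C_def using xX by (simp add: connected_component_refl)
  have CX: "C \<subseteq> X" unfolding C_def by (rule connected_component_subset)
  have connC: "connected C" unfolding C_def by simp
  have Ccomp: "C \<in> components X" unfolding C_def using xX by (rule componentsI)
  have "C \<in> {C. C \<in> components X \<and> C \<inter> Sh X f \<noteq> {}}" using Ccomp xC xS by blast
  then have Chull: "C \<subseteq> comp_hull X (Sh X f)"
    unfolding comp_hull_def by (rule Union_upper)
  have near: "y \<in> recurrent_points X f" if "y \<in> X" "c \<in> C" "dist y c < \<Delta>" for y c
  proof -
    have "y \<in> nbhd X (comp_hull X (Sh X f)) \<Delta>" unfolding nbhd_def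
      using that Chull by (intro CollectI conjI bexI[of _ c]) auto
    then show ?thesis using \<Delta>(2) by (rule subsetD[rotated])
  qed
  have Crec: "c \<in> recurrent_points X f" if "c \<in> C" for c
    using near[of c c] that CX \<Delta>(1) by auto
  show "x \<in> degenerate_points X"
  proof (rule ccontr)
    assume "x \<notin> degenerate_points X"
    then have "C \<noteq> {x}" using xX unfolding degenerate_points_def C_def by blast
    then obtain p where pC: "p \<in> C" and px: "p \<noteq> x" using xC by blast
    define \<epsilon> where "\<epsilon> = min \<Delta> (dist x p / 6)"
    have \<epsilon>: "\<epsilon> > 0" "\<epsilon> \<le> \<Delta>" "6 * \<epsilon> \<le> dist x p" using \<Delta>(1) px by (auto simp: \<epsilon>_def)
    obtain \<delta> where \<delta>: "\<delta> > 0"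
      and shad: "\<And>xs. pseudo_orbit X f \<delta> xs \<Longrightarrow> xs 0 = x \<Longrightarrow> shadowed X f \<epsilon> xs"
    proof -
      have "\<forall>e>0. \<exists>d>0. \<forall>xs. pseudo_orbit X f d xs \<and> xs 0 = x \<longrightarrow> shadowed X f e xs"
        using xS unfolding Sh_def by simp
      then obtain d where "d > 0" "\<forall>xs. pseudo_orbit X f d xs \<and> xs 0 = x \<longrightarrow> shadowed X f \<epsilon> xs"
        using \<epsilon>(1) by blast
      then show ?thesis using that by blast
    qed
    have Reach: "\<exists>t\<ge>1. chain X f \<delta> a b t" if aC: "a \<in> C" and bC: "b \<in> C" for a b
    proof -
      define E where "E = {b\<in>C. \<exists>t\<ge>1. chain X f \<delta> a b t}"
      have "E = C"
      proof (rule clopen_conn[OF connC])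
        show "E \<subseteq> C" unfolding E_def by blast
        obtain k where "k \<ge> 1" "dist ((f^^k) a) a < \<delta>" using rec_ret[OF Crec[OF aC] \<delta>] by blast
        then have "chain X f \<delta> a a k" using chain_orbit[of a X f k a \<delta>] aC CX assms(3) \<delta> by auto
        then show "E \<noteq> {}" unfolding E_def using aC \<open>k \<ge> 1\<close> by blast
        show "\<forall>e\<in>E. \<exists>r>0. \<forall>y\<in>C. dist y e < r \<longrightarrow> y \<in> E"
        proof
          fix e assume "e \<in> E"
          then obtain t where "t \<ge> 1" "chain X f \<delta> a e t" unfolding E_def by blast
          then obtain r where "r > 0" "\<forall>y\<in>X. dist y e < r \<longrightarrow> chain X f \<delta> a y t"
            using chain_local by blast
          then show "\<exists>r>0. \<forall>y\<in>C. dist y e < r \<longrightarrow> y \<in> E"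
            using CX \<open>t \<ge> 1\<close> unfolding E_def by blast
        qed
        show "\<forall>e\<in>C - E. \<exists>r>0. \<forall>y\<in>C. dist y e < r \<longrightarrow> y \<in> C - E"
        proof
          fix e assume eE: "e \<in> C - E"
          show "\<exists>r>0. \<forall>y\<in>C. dist y e < r \<longrightarrow> y \<in> C - E"
          proof (intro exI[of _ "\<delta>/2"] conjI ballI impI)
            show "\<delta>/2 > 0" using \<delta> by simp
            fix y assume yC: "y \<in> C" and dy: "dist y e < \<delta>/2"
            show "y \<in> C - E"
            proof
              show "y \<notin> E"
              proof
                assume "y \<in> E"
                then obtain t where t: "t \<ge> 1" "chain X f \<delta> a y t" unfolding E_def by blast
                obtain k where k: "k \<ge> 1" "dist ((f^^k) y) y < \<delta>/2"
                  using rec_ret[OF Crec[OF yC]] \<delta> by (metis half_gt_zero)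
                have "dist ((f^^k) y) e < \<delta>"
                  using k(2) dy dist_triangle[of "(f^^k) y" e y] by simp
                then have "chain X f \<delta> y e k" using chain_orbit[of y X f k e \<delta>] yC eE CX assms(3) \<delta> k(1) by auto
                then have "chain X f \<delta> a e (t+k)" using chain_concat t(2) by blast
                then show False using eE t(1) unfolding E_def by auto
              qed
            qed (use yC in auto)
          qed
        qed
      qed
      then show ?thesis using bC unfolding E_def by blast
    qed
    obtain n where n: "n \<ge> 1" "chain X f \<delta> x x n" using Reach[OF xC xC] by blast
    define A0 where "A0 = {b\<in>C. \<exists>t\<ge>1. chain X f \<delta> x b t \<and> n dvd t}"
    have "A0 = C"
    proof (rule clopen_conn[OF connC])
      show "A0 \<subseteq> C" unfolding A0_def by blast
      have "x \<in> A0" unfolding A0_def using xC n by auto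
      then show "A0 \<noteq> {}" by blast
      show "\<forall>e\<in>A0. \<exists>r>0. \<forall>y\<in>C. dist y e < r \<longrightarrow> y \<in> A0"
      proof
        fix e assume "e \<in> A0"
        then obtain t where "t \<ge> 1" "chain X f \<delta> x e t" "n dvd t" unfolding A0_def by blast
        then obtain r where "r > 0" "\<forall>y\<in>X. dist y e < r \<longrightarrow> chain X f \<delta> x y t"
          using chain_local by blast
        then show "\<exists>r>0. \<forall>y\<in>C. dist y e < r \<longrightarrow> y \<in> A0"
          using CX \<open>t \<ge> 1\<close> \<open>n dvd t\<close> unfolding A0_def by blast
      qed
      show "\<forall>e\<in>C - A0. \<exists>r>0. \<forall>y\<in>C. dist y e < r \<longrightarrow> y \<in> C - A0"
      proof
        fix e assume eA: "e \<in> C - A0"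
        then obtain t1 where t1: "t1 \<ge> 1" "chain X f \<delta> x e t1" using Reach[OF xC] by blast
        then obtain r where r: "r > 0" "\<forall>y\<in>X. dist y e < r \<longrightarrow> chain X f \<delta> x y t1"
          using chain_local by blast
        show "\<exists>r>0. \<forall>y\<in>C. dist y e < r \<longrightarrow> y \<in> C - A0"
        proof (intro exI[of _ r] conjI ballI impI)
          show "r > 0" by (rule r(1))
          fix y assume yC: "y \<in> C" and dy: "dist y e < r"
          have y1: "chain X f \<delta> x y t1" using r(2) yC CX dy by blast
          show "y \<in> C - A0"
          proof
            show "y \<notin> A0"
            proof
              assume "y \<in> A0"
              then obtain t0 where t0: "t0 \<ge> 1" "chain X f \<delta> x y t0" "n dvd t0" unfolding A0_def by blast
              obtain l where l: "l \<ge> 1" "chain X f \<delta> y x l" using Reach[OF yC xC] by blast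
              obtain k where nk: "n = Suc k" using n(1) by (cases n) auto
              have L1: "chain X f \<delta> x x (t0 + l)" using chain_concat t0(2) l(2) by blast
              have "chain X f \<delta> x x (t1 + l)" using chain_concat y1 l(2) by blast
              then have L2: "chain X f \<delta> x x (k * (t1 + l))" using chain_rep xX by blast
              define L where "L = (t0 + l) + (k * (t1 + l) + t1)"
              have cL: "chain X f \<delta> x e L"
                unfolding L_def using chain_concat[OF L1 chain_concat[OF L2 t1(2)]] .
              obtain a0 where "t0 = n * a0" using t0(3) by blast
              then have "L = n * (a0 + t1 + l)"
                unfolding L_def using nk by (simp add: algebra_simps)
              then have "n dvd L" by simp
              moreover have "L \<ge> 1" unfolding L_def using t1(1) by simp
              ultimately have "e \<in> A0" unfolding A0_def using eA cL by blast
              then show False using eA by blast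
            qed
          qed (use yC in auto)
        qed
      qed
    qed
    then obtain t where t: "t \<ge> 1" "chain X f \<delta> x p t" "n dvd t" using pC unfolding A0_def by blast
    obtain l where l: "l \<ge> 1" "chain X f \<delta> p x l" using Reach[OF pC xC] by blast
    obtain s1 where s1: "s1 0 = x" "s1 t = p" "\<forall>i\<le>t. s1 i \<in> X" "\<forall>i<t. dist (f (s1 i)) (s1 (Suc i)) < \<delta>"
      using t(2) unfolding chain_def by blast
    obtain s2 where s2: "s2 0 = p" "s2 l = x" "\<forall>i\<le>l. s2 i \<in> X" "\<forall>i<l. dist (f (s2 i)) (s2 (Suc i)) < \<delta>"
      using l(2) unfolding chain_def by blast
    obtain s3 where s3: "s3 0 = x" "s3 n = x" "\<forall>i\<le>n. s3 i \<in> X" "\<forall>i<n. dist (f (s3 i)) (s3 (Suc i)) < \<delta>"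
      using n(2) unfolding chain_def by blast
    define w where "w = (\<lambda>i. if i \<le> t then s1 i else s2 (i - t))"
    define T where "T = t + l"
    have w: "w 0 = x" "w T = x" "\<forall>i\<le>T. w i \<in> X" "\<forall>i<T. dist (f (w i)) (w (Suc i)) < \<delta>" "w t = p"
    proof -
      note h = chain_concat_seq[OF s1 s2]
      show "w 0 = x" using h unfolding w_def by blast
      show "w T = x" using h unfolding w_def T_def by blast
      show "\<forall>i\<le>T. w i \<in> X" using h unfolding w_def T_def by blast
      show "\<forall>i<T. dist (f (w i)) (w (Suc i)) < \<delta>" using h unfolding w_def T_def by blast
      show "w t = p" using h unfolding w_def by blast
    qed
    define P where "P = (\<lambda>i. if i < T then w i else s3 ((i - T) mod n))"
    have Ptail: "P i = s3 ((i - T) mod n)" if "i \<ge> T" for i using that by (simp add: P_def)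
    have "pseudo_orbit X f \<delta> P"
      unfolding pseudo_orbit_def
    proof (intro conjI allI)
      fix i
      show "P i \<in> X"
      proof (cases "i < T")
        case True then show ?thesis using w(3) by (simp add: P_def)
      next
        case False
        have "(i-T) mod n \<le> n" using n(1) by (simp add: less_imp_le)
        then show ?thesis using s3(3) False by (simp add: P_def)
      qed
      show "dist (f (P i)) (P (Suc i)) < \<delta>"
      proof (cases "Suc i < T")
        case True then show ?thesis using w(4) by (simp add: P_def)
      next
        case F: False
        show ?thesis
        proof (cases "Suc i = T")
          case True
          then have "P i = w i" "P (Suc i) = w (Suc i)" using w(2) s3(1) by (auto simp: P_def)
          then show ?thesis using w(4) True by auto
        next
          case False
          then have iT: "i \<ge> T" using F by simp
          define j where "j = (i - T) mod n"
          have jn: "j < n" using n(1) by (simp add: j_def)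
          have "Suc i - T = Suc (i - T)" using iT by simp
          then have "P (Suc i) = s3 (if Suc j = n then 0 else Suc j)"
            using Ptail[of "Suc i"] iT by (simp add: j_def mod_Suc)
          also have "\<dots> = s3 (Suc j)" using s3(1,2) by auto
          finally show ?thesis using Ptail[OF iT] s3(4) jn by (simp add: j_def)
        qed
      qed
    qed
    moreover have P0: "P 0 = x" using w(1) T_def t(1) by (simp add: P_def)
    ultimately have "shadowed X f \<epsilon> P" using shad by blast
    then obtain z where zX: "z \<in> X" and zs: "\<And>i. dist ((f^^i) z) (P i) < \<epsilon>"
      unfolding shadowed_def by blast
    have Pt: "P t = p" using w(5) l(1) by (simp add: P_def T_def)
    have dzx: "dist z x < \<epsilon>" using zs[of 0] P0 by simp
    have "z \<in> recurrent_points X f" using near[OF zX xC] dzx \<epsilon>(2) by simp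
    then obtain r :: "nat \<Rightarrow> nat" where r: "strict_mono r" "(\<lambda>i. (f ^^ (r i)) z) \<longlonglongrightarrow> z"
      unfolding recurrent_points_def by blast
    have cont: "continuous_on X (f^^t)" by (rule funpow_cont[OF assms(2,3)])
    have r2: "(\<lambda>i. (f^^t) ((f ^^ (r i)) z)) \<longlonglongrightarrow> (f^^t) z"
      by (rule continuous_on_tendsto_compose[OF cont r(2) zX]) (use funpow_in[OF zX assms(3)] in simp)
    have ev: "eventually (\<lambda>i. dist ((f ^^ (r i)) z) z < \<epsilon> \<and> dist ((f^^t) ((f ^^ (r i)) z)) ((f^^t) z) < \<epsilon> \<and> i \<ge> T) sequentially"
      using r(2) r2 \<epsilon>(1) unfolding tendsto_iff
      by (intro eventually_conj) (auto simp: eventually_ge_at_top)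
    then obtain j where j: "dist ((f ^^ (r j)) z) z < \<epsilon>" "dist ((f^^t) ((f ^^ (r j)) z)) ((f^^t) z) < \<epsilon>" "j \<ge> T"
      unfolding eventually_sequentially by blast
    define m where "m = r j"
    have mT: "m \<ge> T" using j(3) seq_suble[OF r(1), of j] by (simp add: m_def)
    obtain c where tc: "t = n * c" using t(3) by blast
    have "m + t - T = (m - T) + c * n" using mT tc by (simp add: mult.commute)
    then have "(m + t - T) mod n = (m - T) mod n" by (simp only: mod_mult_self1)
    then have Pmt: "P (m + t) = P m" using Ptail[of m] Ptail[of "m+t"] mT by simp
    have fmt: "(f^^(m+t)) z = (f^^t) ((f^^m) z)" by (metis add.commute comp_apply funpow_add)
    have d1: "dist z ((f^^m) z) < \<epsilon>" using j(1) by (simp add: m_def dist_commute)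
    have d2: "dist ((f^^m) z) (P m) < \<epsilon>" using zs[of m] .
    have d3: "dist (P m) ((f^^t) ((f^^m) z)) < \<epsilon>" using zs[of "m+t"] Pmt fmt by (simp add: dist_commute)
    have d4: "dist ((f^^t) ((f^^m) z)) ((f^^t) z) < \<epsilon>" using j(2) by (simp add: m_def)
    have d5: "dist ((f^^t) z) p < \<epsilon>" using zs[of t] Pt by simp
    have e1: "dist x p \<le> dist x z + dist z p" by (rule dist_triangle)
    have e2: "dist z p \<le> dist z ((f^^m) z) + dist ((f^^m) z) p" by (rule dist_triangle)
    have e3: "dist ((f^^m) z) p \<le> dist ((f^^m) z) (P m) + dist (P m) p" by (rule dist_triangle)
    have e4: "dist (P m) p \<le> dist (P m) ((f^^t) ((f^^m) z)) + dist ((f^^t) ((f^^m) z)) p" by (rule dist_triangle)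
    have e5: "dist ((f^^t) ((f^^m) z)) p \<le> dist ((f^^t) ((f^^m) z)) ((f^^t) z) + dist ((f^^t) z) p" by (rule dist_triangle)
    have "dist x p \<le> dist x z + dist z ((f^^m) z) + dist ((f^^m) z) (P m) + dist (P m) ((f^^t) ((f^^m) z))
        + dist ((f^^t) ((f^^m) z)) ((f^^t) z) + dist ((f^^t) z) p"
      using e1 e2 e3 e4 e5 by linarith
    also have "\<dots> < 6 * \<epsilon>" using dzx d1 d2 d3 d4 d5 by (simp add: dist_commute)
    finally show False using \<epsilon>(3) by simp
  qed
qed

end
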